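(* Let $M\in\{0,1\}^{m\times n}$ be the incidence matrix of a simple graph, let $c\in\mathbb Z^n$, and let $r\in\mathbb Z^m$. Let $z^{(1)},\dots,z^{(\ell)}\in\mathbb Z^m$ with $z^{(k)}\equiv r\pmod 2$ for all $k$. Let $\lambda^{(1)},\dots,\lambda^{(\ell)}\ge0$ be reals with $\sum_k\lambda^{(k)}=1$, and suppose $z:=\sum_k\lambda^{(k)}z^{(k)}$ is an integer vector with $z\equiv r\pmod2$. Then \[ f_{c,M}(z)\le\sum_{k\in[\ell]}\lambda^{(k)}f_{c,M}(z^{(k)}). \]
   Context: $f_{c,M}(z)=\min\{c^\top x\mid Mx=z,\ x\in\mathbb Z^n_{\ge0}\}$, with value $\infty$ if infeasible. This is the minimum cost of a perfect $z$-matching of the graph. Congruence modulo $2$ of vectors is componentwise. *)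

theory Defs
  imports Main "HOL-Library.Extended_Real"
begin

text \<open>Vertices are indexed by 0..<m (rows), edges by 0..<n (columns).\<close>
definition simple_graph_incidence :: "nat \<Rightarrow> nat \<Rightarrow> (nat \<Rightarrow> nat \<Rightarrow> int) \<Rightarrow> bool" where
  "simple_graph_incidence m n M \<longleftrightarrow>
     (\<forall>i<m. \<forall>j<n. M i j = 0 \<or> M i j = 1) \<and>
     (\<forall>j<n. card {i. i < m \<and> M i j = 1} = 2) \<and>
     (\<forall>j<n. \<forall>j'<n. j \<noteq> j' \<longrightarrow> (\<exists>i<m. M i j \<noteq> M i j'))"

text \<open>f_{c,M}(z) = min { c^T x | M x = z, x nonnegative integer }, \<infinity> if infeasible
  (Inf of the empty set of ereals is \<infinity>).\<close>
definition fcM :: "nat \<Rightarrow> nat \<Rightarrow> (nat \<Rightarrow> int) \<Rightarrow> (nat \<Rightarrow> nat \<Rightarrow> int) \<Rightarrow> (nat \<Rightarrow> int) \<Rightarrow> ereal" where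
  "fcM m n c M z = Inf {ereal (of_int (\<Sum>j<n. c j * x j)) | x :: nat \<Rightarrow> int.
      (\<forall>j<n. 0 \<le> x j) \<and> (\<forall>i<m. (\<Sum>j<n. M i j * x j) = z i)}"

end

theory Submission
  imports Defs "HOL-Library.FuncSet"
begin

definition isrep :: "'p set \<Rightarrow> ('p \<Rightarrow> nat \<Rightarrow> real) \<Rightarrow> nat \<Rightarrow> (nat \<Rightarrow> real) \<Rightarrow> ('p \<Rightarrow> real) \<Rightarrow> bool" where
  "isrep F val n xb w \<longleftrightarrow> (\<forall>x\<in>F. 0 \<le> w x) \<and> (\<forall>x. x \<notin> F \<longrightarrow> w x = 0) \<and> sum w F = 1 \<and>
     (\<forall>j<n. (\<Sum>x\<in>F. w x * val x j) = xb j)"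

definition indepS :: "'p set \<Rightarrow> ('p \<Rightarrow> nat \<Rightarrow> real) \<Rightarrow> nat \<Rightarrow> 'p set \<Rightarrow> bool" where
  "indepS F val n S \<longleftrightarrow> (\<forall>\<mu>. (\<forall>x. x \<notin> S \<longrightarrow> \<mu> x = 0) \<longrightarrow> sum \<mu> F = 0 \<longrightarrow>
      (\<forall>j<n. (\<Sum>x\<in>F. \<mu> x * val x j) = 0) \<longrightarrow> (\<forall>x. \<mu> x = 0))"

lemma reduce_rep:
  assumes fin: "finite F"
  shows "isrep F val n xb w \<Longrightarrow> \<exists>w'. isrep F val n xb w' \<and> indepS F val n {x\<in>F. w' x \<noteq> 0} \<and>
            (\<Sum>x\<in>F. w' x * psi x) \<le> (\<Sum>x\<in>F. w x * psi x)"
proof (induction "card {x\<in>F. w x \<noteq> 0}" arbitrary: w rule: less_induct)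
  case less
  define S where "S = {x\<in>F. w x \<noteq> 0}"
  show ?case
  proof (cases "indepS F val n S")
    case True
    then show ?thesis using less.prems S_def by blast
  next
    case False
    then obtain \<mu>0 where m0: "\<forall>x. x \<notin> S \<longrightarrow> \<mu>0 x = 0" "sum \<mu>0 F = 0"
      "\<forall>j<n. (\<Sum>x\<in>F. \<mu>0 x * val x j) = 0" "\<exists>x. \<mu>0 x \<noteq> 0"
      unfolding indepS_def by blast
    define \<mu> where "\<mu> = (if (\<Sum>x\<in>F. \<mu>0 x * psi x) \<le> 0 then \<mu>0 else (\<lambda>x. - \<mu>0 x))"
    have mS: "\<forall>x. x \<notin> S \<longrightarrow> \<mu> x = 0" using m0(1) by (auto simp: \<mu>_def)
    have msum: "sum \<mu> F = 0" using m0(2) by (auto simp: \<mu>_def sum_negf)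
    have mval: "\<forall>j<n. (\<Sum>x\<in>F. \<mu> x * val x j) = 0" using m0(3) by (auto simp: \<mu>_def sum_negf)
    have mnz: "\<exists>x. \<mu> x \<noteq> 0" using m0(4) by (auto simp: \<mu>_def)
    have mpsi: "(\<Sum>x\<in>F. \<mu> x * psi x) \<le> 0" by (auto simp: \<mu>_def sum_negf)
    have SF: "S \<subseteq> F" by (auto simp: S_def)
    have wpos: "\<And>x. x \<in> S \<Longrightarrow> w x > 0"
    proof -
      fix x assume "x \<in> S"
      then have "x \<in> F" "w x \<noteq> 0" by (auto simp: S_def)
      moreover have "\<forall>x\<in>F. 0 \<le> w x" using less.prems by (simp add: isrep_def)
      ultimately show "w x > 0" by force
    qed
    define N where "N = {x\<in>F. \<mu> x < 0}"
    have Nne: "N \<noteq> {}"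
    proof
      assume N0: "N = {}"
      then have nn: "\<forall>x\<in>F. 0 \<le> \<mu> x" by (auto simp: N_def not_less)
      then have "\<forall>x\<in>F. \<mu> x = 0" using msum sum_nonneg_eq_0_iff[OF fin] by blast
      moreover obtain x where "\<mu> x \<noteq> 0" using mnz by blast
      ultimately show False using mS SF by blast
    qed
    have NS: "N \<subseteq> S" using mS by (auto simp: N_def)
    have finN: "finite N" using fin by (auto simp: N_def)
    define t where "t = Min ((\<lambda>x. w x / (- \<mu> x)) ` N)"
    have "t \<in> (\<lambda>x. w x / (- \<mu> x)) ` N" unfolding t_def
      by (rule Min_in) (use finN Nne in auto)
    then obtain xs where xs: "xs \<in> N" "t = w xs / (- \<mu> xs)" by blast
    have tle: "\<And>x. x \<in> N \<Longrightarrow> t \<le> w x / (- \<mu> x)" unfolding t_def using finN by auto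
    have tpos: "t > 0"
    proof -
      have "w xs > 0" using xs wpos NS by auto
      moreover have "- \<mu> xs > 0" using xs N_def by auto
      ultimately show ?thesis using xs(2) by (simp add: divide_pos_neg)
    qed
    define w' where "w' = (\<lambda>x. w x + t * \<mu> x)"
    have w'nn: "\<forall>x\<in>F. 0 \<le> w' x"
    proof
      fix x assume xF: "x \<in> F"
      show "0 \<le> w' x"
      proof (cases "\<mu> x < 0")
        case True
        then have "x \<in> N" using xF N_def by auto
        then have "t \<le> w x / (- \<mu> x)" by (rule tle)
        moreover have c: "0 < - \<mu> x" using True by simp
        ultimately have "t * (- \<mu> x) \<le> w x" by (subst (asm) pos_le_divide_eq[OF c])
        then show ?thesis by (simp add: w'_def algebra_simps)
      next
        case False
        then show ?thesis using less.prems xF tpos unfolding isrep_def w'_def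
          by (simp add: add_nonneg_nonneg)
      qed
    qed
    have w'out: "\<forall>x. x \<notin> F \<longrightarrow> w' x = 0" using less.prems mS SF unfolding isrep_def w'_def by auto
    have w'sum: "sum w' F = 1" using less.prems msum unfolding isrep_def w'_def
      by (simp add: sum.distrib sum_distrib_left[symmetric])
    have w'val: "\<forall>j<n. (\<Sum>x\<in>F. w' x * val x j) = xb j"
    proof (intro allI impI)
      fix j assume "j < n"
      have "(\<Sum>x\<in>F. w' x * val x j) = (\<Sum>x\<in>F. w x * val x j) + t * (\<Sum>x\<in>F. \<mu> x * val x j)"
        by (simp add: w'_def algebra_simps sum.distrib sum_distrib_left)
      then show "(\<Sum>x\<in>F. w' x * val x j) = xb j" using less.prems mval \<open>j<n\<close> unfolding isrep_def by auto
    qed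
    have rep': "isrep F val n xb w'" unfolding isrep_def using w'nn w'out w'sum w'val by blast
    have psi': "(\<Sum>x\<in>F. w' x * psi x) \<le> (\<Sum>x\<in>F. w x * psi x)"
    proof -
      have "(\<Sum>x\<in>F. w' x * psi x) = (\<Sum>x\<in>F. w x * psi x) + t * (\<Sum>x\<in>F. \<mu> x * psi x)"
        by (simp add: w'_def algebra_simps sum.distrib sum_distrib_left)
      moreover have "t * (\<Sum>x\<in>F. \<mu> x * psi x) \<le> 0" using tpos mpsi by (simp add: mult_nonneg_nonpos)
      ultimately show ?thesis by simp
    qed
    have sub: "{x\<in>F. w' x \<noteq> 0} \<subseteq> S - {xs}"
    proof
      fix x assume x: "x \<in> {x\<in>F. w' x \<noteq> 0}"
      have "x \<noteq> xs"
      proof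
        assume "x = xs"
        have "\<mu> xs < 0" using xs N_def by auto
        then have "w' xs = 0" using xs(2) by (simp add: w'_def)
        then show False using x \<open>x = xs\<close> by simp
      qed
      moreover have "x \<in> S"
      proof (rule ccontr)
        assume "x \<notin> S"
        then have "\<mu> x = 0" "w x = 0" using mS x S_def by auto
        then show False using x by (simp add: w'_def)
      qed
      ultimately show "x \<in> S - {xs}" by blast
    qed
    have "card {x\<in>F. w' x \<noteq> 0} < card {x\<in>F. w x \<noteq> 0}"
    proof -
      have "finite S" using fin S_def by auto
      moreover have "xs \<in> S" using xs NS by auto
      ultimately have "card (S - {xs}) < card S" by (rule card_Diff1_less)
      moreover have "card {x\<in>F. w' x \<noteq> 0} \<le> card (S - {xs})"
        using sub \<open>finite S\<close> by (simp add: card_mono)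
      ultimately show ?thesis using S_def by simp
    qed
    from less.hyps[OF this rep'] psi' show ?thesis by (meson order_trans)
  qed
qed

lemma rep_min_exists:
  assumes fin: "finite F" and r0: "isrep F val n xb w0"
  shows "\<exists>ws. isrep F val n xb ws \<and> (\<forall>w. isrep F val n xb w \<longrightarrow>
            (\<Sum>x\<in>F. ws x * psi x) \<le> (\<Sum>x\<in>F. w x * psi x))"
proof -
  define B where "B = {w. isrep F val n xb w \<and> indepS F val n {x\<in>F. w x \<noteq> 0}}"
  have inj: "inj_on (\<lambda>w. {x\<in>F. w x \<noteq> 0}) B"
  proof (rule inj_onI)
    fix w1 w2 assume w1: "w1 \<in> B" and w2: "w2 \<in> B" and eq: "{x\<in>F. w1 x \<noteq> 0} = {x\<in>F. w2 x \<noteq> 0}"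
    define \<mu> where "\<mu> = (\<lambda>x. w1 x - w2 x)"
    have r1: "isrep F val n xb w1" and r2: "isrep F val n xb w2" and
      ind: "indepS F val n {x\<in>F. w1 x \<noteq> 0}" using w1 w2 B_def by auto
    have "\<forall>x. x \<notin> {x\<in>F. w1 x \<noteq> 0} \<longrightarrow> \<mu> x = 0"
    proof (intro allI impI)
      fix x assume x: "x \<notin> {x\<in>F. w1 x \<noteq> 0}"
      show "\<mu> x = 0"
      proof (cases "x \<in> F")
        case True then show ?thesis using x eq by (auto simp: \<mu>_def)
      next
        case False then show ?thesis using r1 r2 by (auto simp: \<mu>_def isrep_def)
      qed
    qed
    moreover have "sum \<mu> F = 0" using r1 r2 by (simp add: \<mu>_def isrep_def sum_subtractf)
    moreover have "\<forall>j<n. (\<Sum>x\<in>F. \<mu> x * val x j) = 0"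
      using r1 r2 by (simp add: \<mu>_def isrep_def sum_subtractf left_diff_distrib)
    ultimately have "\<forall>x. \<mu> x = 0" using ind unfolding indepS_def by blast
    then show "w1 = w2" by (auto simp: \<mu>_def)
  qed
  have finB: "finite B"
  proof (rule inj_on_finite[OF inj])
    show "(\<lambda>w. {x\<in>F. w x \<noteq> 0}) ` B \<subseteq> Pow F" by auto
    show "finite (Pow F)" using fin by simp
  qed
  obtain wb where wb: "isrep F val n xb wb" "indepS F val n {x\<in>F. wb x \<noteq> 0}"
    using reduce_rep[OF fin r0] by blast
  then have Bne: "B \<noteq> {}" using B_def by auto
  obtain ws where "is_arg_min (\<lambda>w. (\<Sum>x\<in>F. w x * psi x)) (\<lambda>w. w \<in> B) ws"
    using ex_is_arg_min_if_finite[OF finB Bne] by blast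
  then have ws: "ws \<in> B" "\<forall>w\<in>B. (\<Sum>x\<in>F. ws x * psi x) \<le> (\<Sum>x\<in>F. w x * psi x)"
    by (auto simp: is_arg_min_linorder)
  show ?thesis
  proof (intro exI conjI allI impI)
    show "isrep F val n xb ws" using ws B_def by auto
    fix w assume "isrep F val n xb w"
    then obtain w' where "w' \<in> B" "(\<Sum>x\<in>F. w' x * psi x) \<le> (\<Sum>x\<in>F. w x * psi x)"
      using reduce_rep[OF fin, of val n xb w psi] B_def by blast
    then show "(\<Sum>x\<in>F. ws x * psi x) \<le> (\<Sum>x\<in>F. w x * psi x)" using ws(2) by (meson order_trans)
  qed
qed

definition deg :: "nat \<Rightarrow> (nat \<Rightarrow> nat \<Rightarrow> int) \<Rightarrow> (nat \<Rightarrow> int) \<Rightarrow> nat \<Rightarrow> int" where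
  "deg n M x u = (\<Sum>j<n. M u j * x j)"

definition inr :: "int \<Rightarrow> int \<Rightarrow> bool" where
  "inr d x \<longleftrightarrow> (0 \<le> x \<and> x \<le> d) \<or> (d \<le> x \<and> x \<le> 0)"

lemma edge_ends:
  assumes G: "simple_graph_incidence m n M" and j: "j < n" and w: "w < m" "M w j = 1"
  shows "\<exists>w'<m. w' \<noteq> w \<and> M w' j = 1 \<and> (\<forall>u<m. M u j = (if u = w \<or> u = w' then 1 else 0))"
proof -
  have c: "card {i. i < m \<and> M i j = 1} = 2" using G j unfolding simple_graph_incidence_def by blast
  have h01: "\<forall>u<m. M u j = 0 \<or> M u j = 1" using G j unfolding simple_graph_incidence_def by blast
  obtain x y where xy: "{i. i < m \<and> M i j = 1} = {x, y}" "x \<noteq> y" using c card_2_iff by metis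
  have "w \<in> {x, y}" using xy w by blast
  then obtain w' where w': "{x,y} = {w, w'}" "w' \<noteq> w" using xy by blast
  have "w' \<in> {i. i < m \<and> M i j = 1}" using xy w' by blast
  then have "w' < m" "M w' j = 1" by auto
  moreover have "\<forall>u<m. M u j = (if u = w \<or> u = w' then 1 else 0)"
  proof (intro allI impI)
    fix u assume u: "u < m"
    show "M u j = (if u = w \<or> u = w' then 1 else 0)"
    proof (cases "u = w \<or> u = w'")
      case True then show ?thesis using w \<open>M w' j = 1\<close> by auto
    next
      case False
      then have "u \<notin> {i. i < m \<and> M i j = 1}" using xy w' by blast
      then show ?thesis using u h01 False by auto
    qed
  qed
  ultimately show ?thesis using w' by blast
qed

lemma has_end:
  assumes G: "simple_graph_incidence m n M" and j: "j < n"
  shows "\<exists>w<m. M w j = 1"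
proof -
  have c: "card {i. i < m \<and> M i j = 1} = 2" using G j unfolding simple_graph_incidence_def by blast
  then have "{i. i < m \<and> M i j = 1} \<noteq> {}" by (metis card.empty zero_neq_numeral)
  then show ?thesis by blast
qed

lemma M01: "simple_graph_incidence m n M \<Longrightarrow> u < m \<Longrightarrow> j < n \<Longrightarrow> M u j = 0 \<or> M u j = 1"
  unfolding simple_graph_incidence_def by blast

lemma deg_upd:
  assumes j: "j < n"
  shows "deg n M (x(j := x j + 1)) u = deg n M x u + M u j"
proof -
  have "(\<Sum>i<n. M u i * (x(j := x j + 1)) i) = (\<Sum>i<n. M u i * x i + (if i = j then M u j else 0))"
    by (rule sum.cong) (auto simp: algebra_simps)
  also have "\<dots> = (\<Sum>i<n. M u i * x i) + M u j" using j by (simp add: sum.distrib)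
  finally show ?thesis by (simp add: deg_def)
qed

lemma deg_mono:
  assumes G: "simple_graph_incidence m n M" and u: "u < m" and le: "\<forall>j<n. x j \<le> y j"
  shows "deg n M x u \<le> deg n M y u"
  unfolding deg_def
proof (rule sum_mono)
  fix j assume "j \<in> {..<n}"
  then have "j < n" by simp
  then have "M u j = 0 \<or> M u j = 1" "x j \<le> y j" using M01[OF G u] le by auto
  then show "M u j * x j \<le> M u j * y j" by auto
qed

lemma unused:
  assumes G: "simple_graph_incidence m n M" and u: "u < m" and le: "\<forall>j<n. x j \<le> y j"
    and ne: "deg n M x u \<noteq> deg n M y u"
  shows "\<exists>j<n. M u j = 1 \<and> x j < y j"
proof (rule ccontr)
  assume "\<not> ?thesis"
  then have "\<forall>j<n. M u j * x j = M u j * y j" using M01[OF G u] le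
    by (metis less_le mult_cancel_left1 mult_not_zero)
  then have "deg n M x u = deg n M y u" unfolding deg_def by (intro sum.cong) auto
  then show False using ne by simp
qed

definition tinvD :: "nat \<Rightarrow> nat \<Rightarrow> (nat \<Rightarrow> int) \<Rightarrow> (nat \<Rightarrow> int) \<Rightarrow> (nat \<Rightarrow> int) \<Rightarrow> (nat \<Rightarrow> int) \<Rightarrow> nat \<Rightarrow> bool \<Rightarrow> bool" where
  "tinvD m v da db dA dB w col \<longleftrightarrow> w < m \<and>
    (\<forall>u<m. u \<noteq> v \<and> u \<noteq> w \<longrightarrow> even (dA u + dB u) \<and> inr (da u - db u) (dA u - dB u)) \<and>
    (w \<noteq> v \<longrightarrow> odd (dA v + dB v) \<and> dA v - dB v = 1 \<and> odd (dA w + dB w) \<and>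
        inr (da w - db w) (dA w - dB w - (if col then 1 else -1))) \<and>
    (w = v \<longrightarrow> \<not> col \<and> even (dA v + dB v) \<and> dA v - dB v = 0)"

definition tfinalD :: "nat \<Rightarrow> nat \<Rightarrow> (nat \<Rightarrow> int) \<Rightarrow> (nat \<Rightarrow> int) \<Rightarrow> (nat \<Rightarrow> int) \<Rightarrow> (nat \<Rightarrow> int) \<Rightarrow> bool" where
  "tfinalD m v da db dA dB \<longleftrightarrow> (\<forall>u<m. even (dA u + dB u)) \<and>
    (\<forall>u<m. u \<noteq> v \<longrightarrow> inr (da u - db u) (dA u - dB u)) \<and> dA v - dB v = 2"

lemma T1:
  assumes inv: "tinvD m v da db dA dB v False" and w'm: "w' < m" and w'v: "w' \<noteq> v"
    and upd: "\<forall>u<m. dA' u = dA u + (if u = v \<or> u = w' then 1 else 0)" and vm: "v < m"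
  shows "tinvD m v da db dA' dB w' True"
proof -
  have e1: "dA' v = dA v + 1" using upd vm by simp
  have e2: "dA' w' = dA w' + 1" using upd w'm by simp
  have e4: "\<And>u. u < m \<Longrightarrow> u \<noteq> v \<Longrightarrow> u \<noteq> w' \<Longrightarrow> dA' u = dA u" using upd by simp
  have oth: "\<And>u. u < m \<Longrightarrow> u \<noteq> v \<Longrightarrow> even (dA u + dB u) \<and> inr (da u - db u) (dA u - dB u)"
    using inv unfolding tinvD_def by blast
  have ov: "even (dA v + dB v)" "dA v - dB v = 0" using inv unfolding tinvD_def by auto
  have o2: "even (dA w' + dB w') \<and> inr (da w' - db w') (dA w' - dB w')" using oth[OF w'm w'v] .
  show ?thesis unfolding tinvD_def
  proof (intro conjI allI impI)
    show "w' < m" by fact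
    fix u assume um: "u < m" and uu: "u \<noteq> v \<and> u \<noteq> w'"
    show "even (dA' u + dB u)" using e4[of u] oth[of u] um uu by auto
    show "inr (da u - db u) (dA' u - dB u)" using e4[of u] oth[of u] um uu by auto
  next
    show "odd (dA' v + dB v)" using e1 ov by simp
    show "dA' v - dB v = 1" using e1 ov by simp
    show "odd (dA' w' + dB w')" using e2 o2 by simp
    show "inr (da w' - db w') (dA' w' - dB w' - (if True then 1 else -1))" using e2 o2 by simp
  next
    assume "w' = v" then show "\<not> True" using w'v by simp
  next
    assume "w' = v" then show "even (dA' v + dB v)" using w'v by simp
  next
    assume "w' = v" then show "dA' v - dB v = 0" using w'v by simp
  qed
qed

lemma T2:
  assumes inv: "tinvD m v da db dA dB w True" and wv: "w \<noteq> v" and w'm: "w' < m" and w'w: "w' \<noteq> w"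
    and upd: "\<forall>u<m. dB' u = dB u + (if u = w \<or> u = w' then 1 else 0)" and vm: "v < m"
  shows "tinvD m v da db dA dB' w' False"
proof -
  have wm: "w < m" using inv unfolding tinvD_def by simp
  have e1: "dB' w = dB w + 1" using upd wm by simp
  have e2: "dB' w' = dB w' + 1" using upd w'm by simp
  have e3: "w' \<noteq> v \<Longrightarrow> dB' v = dB v" using upd vm wv by simp
  have e4: "\<And>u. u < m \<Longrightarrow> u \<noteq> w \<Longrightarrow> u \<noteq> w' \<Longrightarrow> dB' u = dB u" using upd by simp
  have oth: "\<And>u. u < m \<Longrightarrow> u \<noteq> v \<Longrightarrow> u \<noteq> w \<Longrightarrow> even (dA u + dB u) \<and> inr (da u - db u) (dA u - dB u)"
    using inv unfolding tinvD_def by blast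
  have ov: "odd (dA v + dB v)" "dA v - dB v = 1" "odd (dA w + dB w)" "inr (da w - db w) (dA w - dB w - 1)"
    using inv wv unfolding tinvD_def by auto
  have atw: "even (dA w + dB' w) \<and> inr (da w - db w) (dA w - dB' w)"
    using ov(3,4) e1 by (auto simp: inr_def)
  show ?thesis unfolding tinvD_def
  proof (intro conjI allI impI)
    show "w' < m" by fact
    fix u assume um: "u < m" and uu: "u \<noteq> v \<and> u \<noteq> w'"
    show "even (dA u + dB' u)"
      using atw e4[of u] oth[of u] um uu by (cases "u = w") auto
    show "inr (da u - db u) (dA u - dB' u)"
      using atw e4[of u] oth[of u] um uu by (cases "u = w") auto
  next
    assume w'v: "w' \<noteq> v"
    have o2: "even (dA w' + dB w') \<and> inr (da w' - db w') (dA w' - dB w')" using oth[OF w'm w'v w'w] .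
    show "odd (dA v + dB' v)" using e3 w'v ov(1) by simp
    show "dA v - dB' v = 1" using e3 w'v ov(2) by simp
    show "odd (dA w' + dB' w')" using e2 o2 by simp
    show "inr (da w' - db w') (dA w' - dB' w' - (if False then 1 else -1))" using e2 o2 by simp
  next
    assume w'v: "w' = v"
    show "\<not> False" by simp
    show "even (dA v + dB' v)" using e2 w'v ov(1) by simp
    show "dA v - dB' v = 0" using e2 w'v ov(2) by simp
  qed
qed

lemma T3:
  assumes inv: "tinvD m v da db dA dB w True" and wv: "w \<noteq> v" and eqB: "dB w = db w" and le: "dA' w \<le> da w"
    and w'm: "w' < m" and w'w: "w' \<noteq> w"
    and upd: "\<forall>u<m. dA' u = dA u + (if u = w \<or> u = w' then 1 else 0)"
    and vm: "v < m"
  shows "(w' = v \<longrightarrow> tfinalD m v da db dA' dB) \<and> (w' \<noteq> v \<longrightarrow> tinvD m v da db dA' dB w' True)"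
proof -
  have wm: "w < m" using inv unfolding tinvD_def by simp
  have e1: "dA' w = dA w + 1" using upd wm by simp
  have e2: "dA' w' = dA w' + 1" using upd w'm by simp
  have e3: "w' \<noteq> v \<Longrightarrow> dA' v = dA v" using upd vm wv by simp
  have e4: "\<And>u. u < m \<Longrightarrow> u \<noteq> w \<Longrightarrow> u \<noteq> w' \<Longrightarrow> dA' u = dA u" using upd by simp
  have oth: "\<And>u. u < m \<Longrightarrow> u \<noteq> v \<Longrightarrow> u \<noteq> w \<Longrightarrow> even (dA u + dB u) \<and> inr (da u - db u) (dA u - dB u)"
    using inv unfolding tinvD_def by blast
  have ov: "odd (dA v + dB v)" "dA v - dB v = 1" "odd (dA w + dB w)" "inr (da w - db w) (dA w - dB w - 1)"
    using inv wv unfolding tinvD_def by auto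
  have atw: "even (dA' w + dB w) \<and> inr (da w - db w) (dA' w - dB w)"
    using ov(3,4) e1 eqB le unfolding inr_def by auto
  show ?thesis
  proof (intro conjI impI)
    assume w'v: "w' = v"
    show "tfinalD m v da db dA' dB" unfolding tfinalD_def
    proof (intro conjI allI impI)
      fix u assume um: "u < m"
      show "even (dA' u + dB u)"
      proof -
        consider "u = w" | "u = v" | "u \<noteq> w \<and> u \<noteq> v" by blast
        then show ?thesis
        proof cases
          case 1 then show ?thesis using atw by simp
        next
          case 2 then show ?thesis using e2 w'v ov(1) by simp
        next
          case 3 then show ?thesis using e4[of u] oth[of u] um w'v by simp
        qed
      qed
    next
      fix u assume um: "u < m" and uv: "u \<noteq> v"
      show "inr (da u - db u) (dA' u - dB u)"
      proof (cases "u = w")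
        case True then show ?thesis using atw by simp
      next
        case False then show ?thesis using e4[of u] oth[of u] um uv w'v by simp
      qed
    next
      show "dA' v - dB v = 2" using e2 w'v ov(2) by simp
    qed
  next
    assume w'v: "w' \<noteq> v"
    have o2: "even (dA w' + dB w') \<and> inr (da w' - db w') (dA w' - dB w')" using oth[OF w'm w'v w'w] .
    show "tinvD m v da db dA' dB w' True" unfolding tinvD_def
    proof (intro conjI allI impI)
      show "w' < m" by fact
      fix u assume um: "u < m" and uu: "u \<noteq> v \<and> u \<noteq> w'"
      show "even (dA' u + dB u)"
        using atw e4[of u] oth[of u] um uu by (cases "u = w") auto
      show "inr (da u - db u) (dA' u - dB u)"
        using atw e4[of u] oth[of u] um uu by (cases "u = w") auto
    next
      show "odd (dA' v + dB v)" using e3 w'v ov(1) by simp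
      show "dA' v - dB v = 1" using e3 w'v ov(2) by simp
      show "odd (dA' w' + dB w')" using e2 o2 by simp
      show "inr (da w' - db w') (dA' w' - dB w' - (if True then 1 else -1))" using e2 o2 by simp
    next
      assume "w' = v" then show "\<not> True" using w'v by simp
    next
      assume "w' = v" then show "even (dA' v + dB v)" using w'v by simp
    next
      assume "w' = v" then show "dA' v - dB v = 0" using w'v by simp
    qed
  qed
qed

lemma T4:
  assumes inv: "tinvD m v da db dA dB w False" and wv: "w \<noteq> v" and w'm: "w' < m" and w'w: "w' \<noteq> w"
    and upd: "\<forall>u<m. dA' u = dA u + (if u = w \<or> u = w' then 1 else 0)" and vm: "v < m"
  shows "(w' = v \<longrightarrow> tfinalD m v da db dA' dB) \<and> (w' \<noteq> v \<longrightarrow> tinvD m v da db dA' dB w' True)"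
proof -
  have wm: "w < m" using inv unfolding tinvD_def by simp
  have e1: "dA' w = dA w + 1" using upd wm by simp
  have e2: "dA' w' = dA w' + 1" using upd w'm by simp
  have e3: "w' \<noteq> v \<Longrightarrow> dA' v = dA v" using upd vm wv by simp
  have e4: "\<And>u. u < m \<Longrightarrow> u \<noteq> w \<Longrightarrow> u \<noteq> w' \<Longrightarrow> dA' u = dA u" using upd by simp
  have oth: "\<And>u. u < m \<Longrightarrow> u \<noteq> v \<Longrightarrow> u \<noteq> w \<Longrightarrow> even (dA u + dB u) \<and> inr (da u - db u) (dA u - dB u)"
    using inv unfolding tinvD_def by blast
  have ov: "odd (dA v + dB v)" "dA v - dB v = 1" "odd (dA w + dB w)" "inr (da w - db w) (dA w - dB w + 1)"
    using inv wv unfolding tinvD_def by auto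
  have atw: "even (dA' w + dB w) \<and> inr (da w - db w) (dA' w - dB w)"
    using ov(3,4) e1 by (auto simp: inr_def)
  show ?thesis
  proof (intro conjI impI)
    assume w'v: "w' = v"
    show "tfinalD m v da db dA' dB" unfolding tfinalD_def
    proof (intro conjI allI impI)
      fix u assume um: "u < m"
      show "even (dA' u + dB u)"
      proof -
        consider "u = w" | "u = v" | "u \<noteq> w \<and> u \<noteq> v" by blast
        then show ?thesis
        proof cases
          case 1 then show ?thesis using atw by simp
        next
          case 2 then show ?thesis using e2 w'v ov(1) by simp
        next
          case 3 then show ?thesis using e4[of u] oth[of u] um w'v by simp
        qed
      qed
    next
      fix u assume um: "u < m" and uv: "u \<noteq> v"
      show "inr (da u - db u) (dA' u - dB u)"
      proof (cases "u = w")
        case True then show ?thesis using atw by simp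
      next
        case False then show ?thesis using e4[of u] oth[of u] um uv w'v by simp
      qed
    next
      show "dA' v - dB v = 2" using e2 w'v ov(2) by simp
    qed
  next
    assume w'v: "w' \<noteq> v"
    have o2: "even (dA w' + dB w') \<and> inr (da w' - db w') (dA w' - dB w')" using oth[OF w'm w'v w'w] .
    show "tinvD m v da db dA' dB w' True" unfolding tinvD_def
    proof (intro conjI allI impI)
      show "w' < m" by fact
      fix u assume um: "u < m" and uu: "u \<noteq> v \<and> u \<noteq> w'"
      show "even (dA' u + dB u)"
        using atw e4[of u] oth[of u] um uu by (cases "u = w") auto
      show "inr (da u - db u) (dA' u - dB u)"
        using atw e4[of u] oth[of u] um uu by (cases "u = w") auto
    next
      show "odd (dA' v + dB v)" using e3 w'v ov(1) by simp
      show "dA' v - dB v = 1" using e3 w'v ov(2) by simp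
      show "odd (dA' w' + dB w')" using e2 o2 by simp
      show "inr (da w' - db w') (dA' w' - dB w' - (if True then 1 else -1))" using e2 o2 by simp
    next
      assume "w' = v" then show "\<not> True" using w'v by simp
    next
      assume "w' = v" then show "even (dA' v + dB v)" using w'v by simp
    next
      assume "w' = v" then show "dA' v - dB v = 0" using w'v by simp
    qed
  qed
qed

lemma T5:
  assumes inv: "tinvD m v da db dA dB w False" and wv: "w \<noteq> v" and eqA: "dA w = da w" and le: "dB' w \<le> db w"
    and w'm: "w' < m" and w'w: "w' \<noteq> w"
    and upd: "\<forall>u<m. dB' u = dB u + (if u = w \<or> u = w' then 1 else 0)"
    and vm: "v < m"
  shows "tinvD m v da db dA dB' w' False"
proof -
  have wm: "w < m" using inv unfolding tinvD_def by simp
  have e1: "dB' w = dB w + 1" using upd wm by simp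
  have e2: "dB' w' = dB w' + 1" using upd w'm by simp
  have e3: "w' \<noteq> v \<Longrightarrow> dB' v = dB v" using upd vm wv by simp
  have e4: "\<And>u. u < m \<Longrightarrow> u \<noteq> w \<Longrightarrow> u \<noteq> w' \<Longrightarrow> dB' u = dB u" using upd by simp
  have oth: "\<And>u. u < m \<Longrightarrow> u \<noteq> v \<Longrightarrow> u \<noteq> w \<Longrightarrow> even (dA u + dB u) \<and> inr (da u - db u) (dA u - dB u)"
    using inv unfolding tinvD_def by blast
  have ov: "odd (dA v + dB v)" "dA v - dB v = 1" "odd (dA w + dB w)" "inr (da w - db w) (dA w - dB w + 1)"
    using inv wv unfolding tinvD_def by auto
  have atw: "even (dA w + dB' w) \<and> inr (da w - db w) (dA w - dB' w)"
    using ov(3,4) e1 eqA le unfolding inr_def by auto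
  show ?thesis unfolding tinvD_def
  proof (intro conjI allI impI)
    show "w' < m" by fact
    fix u assume um: "u < m" and uu: "u \<noteq> v \<and> u \<noteq> w'"
    show "even (dA u + dB' u)"
      using atw e4[of u] oth[of u] um uu by (cases "u = w") auto
    show "inr (da u - db u) (dA u - dB' u)"
      using atw e4[of u] oth[of u] um uu by (cases "u = w") auto
  next
    assume w'v: "w' \<noteq> v"
    have o2: "even (dA w' + dB w') \<and> inr (da w' - db w') (dA w' - dB w')" using oth[OF w'm w'v w'w] .
    show "odd (dA v + dB' v)" using e3 w'v ov(1) by simp
    show "dA v - dB' v = 1" using e3 w'v ov(2) by simp
    show "odd (dA w' + dB' w')" using e2 o2 by simp
    show "inr (da w' - db w') (dA w' - dB' w' - (if False then 1 else -1))" using e2 o2 by simp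
  next
    assume w'v: "w' = v"
    show "\<not> False" by simp
    show "even (dA v + dB' v)" using e2 w'v ov(1) by simp
    show "dA v - dB' v = 0" using e2 w'v ov(2) by simp
  qed
qed

lemma P1:
  assumes "tinvD m v da db dA dB v False" "da v - db v \<ge> 2" "dB v \<le> db v"
  shows "dA v \<noteq> da v"
  using assms unfolding tinvD_def by auto

lemma P3:
  assumes "tinvD m v da db dA dB w True" "w \<noteq> v" "dB w = db w" "even (da w + db w)"
  shows "dA w \<noteq> da w"
  using assms unfolding tinvD_def by auto

lemma P5:
  assumes "tinvD m v da db dA dB w False" "w \<noteq> v" "dA w = da w" "even (da w + db w)"
  shows "dB w \<noteq> db w"
  using assms unfolding tinvD_def by auto

lemma meas_upd:
  fixes a A b B :: "nat \<Rightarrow> int"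
  assumes "j < n"
  shows "(\<Sum>i<n. (a i - (A(j := A j + 1)) i) + (b i - B i)) = (\<Sum>i<n. (a i - A i) + (b i - B i)) - 1"
    and "(\<Sum>i<n. (a i - A i) + (b i - (B(j := B j + 1)) i)) = (\<Sum>i<n. (a i - A i) + (b i - B i)) - 1"
proof -
  have "(\<Sum>i<n. (a i - (A(j := A j + 1)) i) + (b i - B i)) = (\<Sum>i<n. ((a i - A i) + (b i - B i)) - (if i = j then 1 else 0))"
    by (rule sum.cong) auto
  also have "\<dots> = (\<Sum>i<n. (a i - A i) + (b i - B i)) - 1" using assms by (simp add: sum_subtractf)
  finally show "(\<Sum>i<n. (a i - (A(j := A j + 1)) i) + (b i - B i)) = (\<Sum>i<n. (a i - A i) + (b i - B i)) - 1" .
  have "(\<Sum>i<n. (a i - A i) + (b i - (B(j := B j + 1)) i)) = (\<Sum>i<n. ((a i - A i) + (b i - B i)) - (if i = j then 1 else 0))"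
    by (rule sum.cong) auto
  also have "\<dots> = (\<Sum>i<n. (a i - A i) + (b i - B i)) - 1" using assms by (simp add: sum_subtractf)
  finally show "(\<Sum>i<n. (a i - A i) + (b i - (B(j := B j + 1)) i)) = (\<Sum>i<n. (a i - A i) + (b i - B i)) - 1" .
qed

lemma deg_edge:
  assumes G: "simple_graph_incidence m n M" and j: "j < n" and w: "w < m" "M w j = 1"
  shows "\<exists>w'<m. w' \<noteq> w \<and> (\<forall>x. \<forall>u<m. deg n M (x(j := x j + 1)) u = deg n M x u + (if u = w \<or> u = w' then 1 else 0))"
proof -
  obtain w' where w': "w' < m" "w' \<noteq> w" "\<forall>u<m. M u j = (if u = w \<or> u = w' then 1 else 0)"
    using edge_ends[OF G j w] by blast
  show ?thesis using w' deg_upd[OF j] by (intro exI[of _ w']) auto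
qed

lemma trail:
  assumes G: "simple_graph_incidence m n M" and vm: "v < m"
    and dv: "deg n M a v - deg n M b v \<ge> 2"
    and par: "\<forall>u<m. even (deg n M a u + deg n M b u)"
  shows "(\<forall>j<n. 0 \<le> A j \<and> A j \<le> a j \<and> 0 \<le> B j \<and> B j \<le> b j) \<Longrightarrow>
    tinvD m v (deg n M a) (deg n M b) (deg n M A) (deg n M B) w col \<Longrightarrow>
    \<exists>A' B'. (\<forall>j<n. 0 \<le> A' j \<and> A' j \<le> a j \<and> 0 \<le> B' j \<and> B' j \<le> b j) \<and>
       tfinalD m v (deg n M a) (deg n M b) (deg n M A') (deg n M B')"
proof (induction "nat (\<Sum>j<n. (a j - A j) + (b j - B j))" arbitrary: A B w col rule: less_induct)
  case less
  note bnd = less.prems(1) and inv = less.prems(2)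
  have wm: "w < m" using inv unfolding tinvD_def by simp
  have S0: "(\<Sum>j<n. (a j - A j) + (b j - B j)) \<ge> 0" using bnd by (intro sum_nonneg) auto
  have stepA: "\<exists>A' B'. (\<forall>j<n. 0 \<le> A' j \<and> A' j \<le> a j \<and> 0 \<le> B' j \<and> B' j \<le> b j) \<and>
       tfinalD m v (deg n M a) (deg n M b) (deg n M A') (deg n M B')"
    if j: "j < n" "A j < a j" and iv: "tinvD m v (deg n M a) (deg n M b) (deg n M (A(j := A j + 1))) (deg n M B) w' c'"
    for j w' c'
  proof -
    have b': "\<forall>i<n. 0 \<le> (A(j := A j + 1)) i \<and> (A(j := A j + 1)) i \<le> a i \<and> 0 \<le> B i \<and> B i \<le> b i"
      using bnd j by auto
    have "nat (\<Sum>i<n. (a i - (A(j := A j + 1)) i) + (b i - B i)) < nat (\<Sum>j<n. (a j - A j) + (b j - B j))"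
    proof -
      have "(\<Sum>i<n. (a i - (A(j := A j + 1)) i) + (b i - B i)) \<ge> 0" using b' by (intro sum_nonneg) auto
      then show ?thesis using meas_upd(1)[OF j(1), of a A b B] by (simp add: nat_less_eq_zless)
    qed
    from less.hyps[OF this b' iv] show ?thesis .
  qed
  have stepB: "\<exists>A' B'. (\<forall>j<n. 0 \<le> A' j \<and> A' j \<le> a j \<and> 0 \<le> B' j \<and> B' j \<le> b j) \<and>
       tfinalD m v (deg n M a) (deg n M b) (deg n M A') (deg n M B')"
    if j: "j < n" "B j < b j" and iv: "tinvD m v (deg n M a) (deg n M b) (deg n M A) (deg n M (B(j := B j + 1))) w' c'"
    for j w' c'
  proof -
    have b': "\<forall>i<n. 0 \<le> A i \<and> A i \<le> a i \<and> 0 \<le> (B(j := B j + 1)) i \<and> (B(j := B j + 1)) i \<le> b i"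
      using bnd j by auto
    have "nat (\<Sum>i<n. (a i - A i) + (b i - (B(j := B j + 1)) i)) < nat (\<Sum>j<n. (a j - A j) + (b j - B j))"
    proof -
      have "(\<Sum>i<n. (a i - A i) + (b i - (B(j := B j + 1)) i)) \<ge> 0" using b' by (intro sum_nonneg) auto
      then show ?thesis using meas_upd(2)[OF j(1), of a A b B] by (simp add: nat_less_eq_zless)
    qed
    from less.hyps[OF this b' iv] show ?thesis .
  qed
  have Ale: "\<forall>j<n. A j \<le> a j" and Ble: "\<forall>j<n. B j \<le> b j" using bnd by auto
  show ?case
  proof (cases "w = v")
    case True
    have nc: "\<not> col" using inv True unfolding tinvD_def by simp
    have "deg n M B v \<le> deg n M b v" using deg_mono[OF G vm Ble] .
    moreover have inv': "tinvD m v (deg n M a) (deg n M b) (deg n M A) (deg n M B) v False" using inv True nc by simp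
    ultimately have "deg n M A v \<noteq> deg n M a v" using P1[of m v] dv by blast
    then obtain j where j: "j < n" "M v j = 1" "A j < a j" using unused[OF G vm Ale] by metis
    obtain w' where w': "w' < m" "w' \<noteq> v"
      "\<forall>x. \<forall>u<m. deg n M (x(j := x j + 1)) u = deg n M x u + (if u = v \<or> u = w' then 1 else 0)"
      using deg_edge[OF G j(1) vm j(2)] by blast
    have "tinvD m v (deg n M a) (deg n M b) (deg n M (A(j := A j + 1))) (deg n M B) w' True"
      using T1[OF inv' w'(1,2) _ vm] w'(3) by blast
    then show ?thesis using stepA j by blast
  next
    case wv: False
    show ?thesis
    proof (cases col)
      case True
      have invT: "tinvD m v (deg n M a) (deg n M b) (deg n M A) (deg n M B) w True" using inv True by simp
      show ?thesis
      proof (cases "\<exists>j<n. M w j = 1 \<and> B j < b j")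
        case True
        then obtain j where j: "j < n" "M w j = 1" "B j < b j" by blast
        obtain w' where w': "w' < m" "w' \<noteq> w"
          "\<forall>x. \<forall>u<m. deg n M (x(j := x j + 1)) u = deg n M x u + (if u = w \<or> u = w' then 1 else 0)"
          using deg_edge[OF G j(1) wm j(2)] by blast
        have "tinvD m v (deg n M a) (deg n M b) (deg n M A) (deg n M (B(j := B j + 1))) w' False"
          using T2[where dB'="deg n M (B(j := B j + 1))", OF invT wv w'(1,2) _ vm] w'(3) by blast
        then show ?thesis using stepB j by blast
      next
        case False
        then have eqB: "deg n M B w = deg n M b w" using unused[OF G wm Ble] by blast
        then have "deg n M A w \<noteq> deg n M a w" using P3[OF invT wv] par wm by blast
        then obtain j where j: "j < n" "M w j = 1" "A j < a j" using unused[OF G wm Ale] by metis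
        obtain w' where w': "w' < m" "w' \<noteq> w"
          "\<forall>x. \<forall>u<m. deg n M (x(j := x j + 1)) u = deg n M x u + (if u = w \<or> u = w' then 1 else 0)"
          using deg_edge[OF G j(1) wm j(2)] by blast
        have le: "deg n M (A(j := A j + 1)) w \<le> deg n M a w"
          using deg_mono[OF G wm, of "A(j := A j + 1)" a] Ale j by auto
        have T: "(w' = v \<longrightarrow> tfinalD m v (deg n M a) (deg n M b) (deg n M (A(j := A j + 1))) (deg n M B)) \<and>
          (w' \<noteq> v \<longrightarrow> tinvD m v (deg n M a) (deg n M b) (deg n M (A(j := A j + 1))) (deg n M B) w' True)"
          using T3[where da="deg n M a" and db="deg n M b" and dA="deg n M A" and dB="deg n M B" and dA'="deg n M (A(j := A j + 1))", OF invT wv eqB le w'(1,2) _ vm] w'(3) by blast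
        show ?thesis
        proof (cases "w' = v")
          case True
          have "\<forall>i<n. 0 \<le> (A(j := A j + 1)) i \<and> (A(j := A j + 1)) i \<le> a i \<and> 0 \<le> B i \<and> B i \<le> b i"
            using bnd j by auto
          then show ?thesis using T True by blast
        next
          case False
          then show ?thesis using T stepA j by blast
        qed
      qed
    next
      case False
      then have nc: "\<not> col" .
      have invF: "tinvD m v (deg n M a) (deg n M b) (deg n M A) (deg n M B) w False" using inv nc by simp
      show ?thesis
      proof (cases "\<exists>j<n. M w j = 1 \<and> A j < a j")
        case True
        then obtain j where j: "j < n" "M w j = 1" "A j < a j" by blast
        obtain w' where w': "w' < m" "w' \<noteq> w"
          "\<forall>x. \<forall>u<m. deg n M (x(j := x j + 1)) u = deg n M x u + (if u = w \<or> u = w' then 1 else 0)"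
          using deg_edge[OF G j(1) wm j(2)] by blast
        have T: "(w' = v \<longrightarrow> tfinalD m v (deg n M a) (deg n M b) (deg n M (A(j := A j + 1))) (deg n M B)) \<and>
          (w' \<noteq> v \<longrightarrow> tinvD m v (deg n M a) (deg n M b) (deg n M (A(j := A j + 1))) (deg n M B) w' True)"
          using T4[where dA'="deg n M (A(j := A j + 1))", OF invF wv w'(1,2) _ vm] w'(3) by blast
        show ?thesis
        proof (cases "w' = v")
          case True
          have "\<forall>i<n. 0 \<le> (A(j := A j + 1)) i \<and> (A(j := A j + 1)) i \<le> a i \<and> 0 \<le> B i \<and> B i \<le> b i"
            using bnd j by auto
          then show ?thesis using T True by blast
        next
          case False
          then show ?thesis using T stepA j by blast
        qed
      next
        case False
        then have eqA: "deg n M A w = deg n M a w" using unused[OF G wm Ale] by blast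
        then have "deg n M B w \<noteq> deg n M b w" using P5[OF invF wv] par wm by blast
        then obtain j where j: "j < n" "M w j = 1" "B j < b j" using unused[OF G wm Ble] by metis
        obtain w' where w': "w' < m" "w' \<noteq> w"
          "\<forall>x. \<forall>u<m. deg n M (x(j := x j + 1)) u = deg n M x u + (if u = w \<or> u = w' then 1 else 0)"
          using deg_edge[OF G j(1) wm j(2)] by blast
        have le: "deg n M (B(j := B j + 1)) w \<le> deg n M b w"
          using deg_mono[OF G wm, of "B(j := B j + 1)" b] Ble j by auto
        have "tinvD m v (deg n M a) (deg n M b) (deg n M A) (deg n M (B(j := B j + 1))) w' False"
          using T5[where da="deg n M a" and db="deg n M b" and dA="deg n M A" and dB="deg n M B" and dB'="deg n M (B(j := B j + 1))", OF invF wv eqA le w'(1,2) _ vm] w'(3) by blast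
        then show ?thesis using stepB j by blast
      qed
    qed
  qed
qed

definition inF :: "nat \<Rightarrow> nat \<Rightarrow> (nat \<Rightarrow> nat \<Rightarrow> int) \<Rightarrow> (nat \<Rightarrow> int) \<Rightarrow> (nat \<Rightarrow> int) \<Rightarrow> (nat \<Rightarrow> int) \<Rightarrow> bool" where
  "inF m n M z Zm x \<longleftrightarrow> (\<forall>j<n. 0 \<le> x j) \<and> (\<forall>j. n \<le> j \<longrightarrow> x j = 0) \<and>
     (\<forall>u<m. deg n M x u \<le> Zm u) \<and> (\<forall>u<m. deg n M x u mod 2 = z u mod 2)"

definition phi :: "nat \<Rightarrow> nat \<Rightarrow> (nat \<Rightarrow> nat \<Rightarrow> int) \<Rightarrow> (nat \<Rightarrow> int) \<Rightarrow> (nat \<Rightarrow> int) \<Rightarrow> int" where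
  "phi m n M z x = (\<Sum>u<m. (deg n M x u - z u)\<^sup>2)"

lemma sq_step:
  fixes p q f z :: int
  assumes "inr (p - q) f"
  shows "(p - f - z)\<^sup>2 + (q + f - z)\<^sup>2 \<le> (p - z)\<^sup>2 + (q - z)\<^sup>2"
proof -
  have e: "(p - f - z)\<^sup>2 + (q + f - z)\<^sup>2 = (p - z)\<^sup>2 + (q - z)\<^sup>2 + 2 * (f * (f - (p - q)))"
    by (simp add: power2_eq_square algebra_simps)
  have "f * (f - (p - q)) \<le> 0"
    using assms unfolding inr_def
    by (auto intro: mult_nonneg_nonpos mult_nonpos_nonneg)
  then show ?thesis using e by simp
qed

lemma sq_step_strict:
  fixes p q z :: int
  assumes "p - q \<ge> 4"
  shows "(p - 2 - z)\<^sup>2 + (q + 2 - z)\<^sup>2 < (p - z)\<^sup>2 + (q - z)\<^sup>2"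
proof -
  have e: "(p - 2 - z)\<^sup>2 + (q + 2 - z)\<^sup>2 = (p - z)\<^sup>2 + (q - z)\<^sup>2 + 4 * (2 - (p - q))"
    by (simp add: power2_eq_square algebra_simps)
  then show ?thesis using assms by simp
qed

lemma par_aux: "(x::int) mod 2 = y mod 2 \<Longrightarrow> even (x + y)" by presburger
lemma par_aux2: "(x::int) mod 2 = y mod 2 \<Longrightarrow> x > y \<Longrightarrow> x \<ge> y + 2" by presburger
lemma par_aux3: "even (f::int) \<Longrightarrow> x mod 2 = y mod 2 \<Longrightarrow> (x - f) mod 2 = y mod 2 \<and> (x + f) mod 2 = y mod 2" by presburger

lemma deg_zero: "deg n M (\<lambda>_. 0) u = 0" by (simp add: deg_def)

lemma deg_lin:
  "deg n M (\<lambda>j. if j < n then a j - A j + B j else 0) u = deg n M a u - deg n M A u + deg n M B u"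
  "deg n M (\<lambda>j. if j < n then b j + A j - B j else 0) u = deg n M b u + deg n M A u - deg n M B u"
  unfolding deg_def by (simp_all add: sum_subtractf sum.distrib algebra_simps)

lemma exchange:
  assumes G: "simple_graph_incidence m n M"
    and a: "inF m n M z Zm a" and b: "inF m n M z Zm b" and vm: "v < m"
    and av: "deg n M a v > z v" and bv: "deg n M b v < z v"
  shows "\<exists>a' b'. inF m n M z Zm a' \<and> inF m n M z Zm b' \<and> (\<forall>j. a' j + b' j = a j + b j) \<and>
           phi m n M z a' + phi m n M z b' < phi m n M z a + phi m n M z b"
proof -
  have pa: "\<forall>u<m. deg n M a u mod 2 = z u mod 2" and pb: "\<forall>u<m. deg n M b u mod 2 = z u mod 2"
    using a b unfolding inF_def by auto
  have d4: "deg n M a v - deg n M b v \<ge> 4"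
  proof -
    have m1: "deg n M a v mod 2 = z v mod 2" "deg n M b v mod 2 = z v mod 2" using pa pb vm by auto
    have "deg n M a v \<ge> z v + 2" using av m1(1) par_aux2 by blast
    moreover have "deg n M b v + 2 \<le> z v" using bv m1(2) par_aux2[of "z v" "deg n M b v"] by simp
    ultimately show ?thesis by simp
  qed
  have par: "\<forall>u<m. even (deg n M a u + deg n M b u)"
  proof (intro allI impI)
    fix u assume "u < m"
    then have "deg n M a u mod 2 = deg n M b u mod 2" using pa pb by simp
    then show "even (deg n M a u + deg n M b u)" by (rule par_aux)
  qed
  have nn: "\<forall>j<n. 0 \<le> a j \<and> 0 \<le> b j" using a b unfolding inF_def by auto
  have inv0: "tinvD m v (deg n M a) (deg n M b) (deg n M (\<lambda>_. 0)) (deg n M (\<lambda>_. 0)) v False"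
    unfolding tinvD_def deg_zero inr_def using vm by auto
  have b0: "\<forall>j<n. 0 \<le> (\<lambda>_. 0::int) j \<and> (\<lambda>_. 0) j \<le> a j \<and> 0 \<le> (\<lambda>_. 0::int) j \<and> (\<lambda>_. 0) j \<le> b j"
    using nn by simp
  obtain A B where AB: "\<forall>j<n. 0 \<le> A j \<and> A j \<le> a j \<and> 0 \<le> B j \<and> B j \<le> b j"
    and fin: "tfinalD m v (deg n M a) (deg n M b) (deg n M A) (deg n M B)"
    using trail[OF G vm _ par b0 inv0] d4 by fastforce
  define f where "f = (\<lambda>u. deg n M A u - deg n M B u)"
  have fe: "\<forall>u<m. even (f u)" using fin unfolding tfinalD_def f_def
    by (metis even_add even_diff)
  have fr: "\<forall>u<m. u \<noteq> v \<longrightarrow> inr (deg n M a u - deg n M b u) (f u)" using fin unfolding tfinalD_def f_def by blast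
  have fv: "f v = 2" using fin unfolding tfinalD_def f_def by blast
  define a' where "a' = (\<lambda>j. if j < n then a j - A j + B j else 0)"
  define b' where "b' = (\<lambda>j. if j < n then b j + A j - B j else 0)"
  have da': "\<And>u. deg n M a' u = deg n M a u - f u" unfolding a'_def f_def deg_lin by simp
  have db': "\<And>u. deg n M b' u = deg n M b u + f u" unfolding b'_def f_def deg_lin by simp
  have Za: "\<forall>u<m. deg n M a u \<le> Zm u" and Zb: "\<forall>u<m. deg n M b u \<le> Zm u" using a b unfolding inF_def by auto
  have rng: "\<forall>u<m. deg n M a u - f u \<le> Zm u \<and> deg n M b u + f u \<le> Zm u"
  proof (intro allI impI)
    fix u assume um: "u < m"
    show "deg n M a u - f u \<le> Zm u \<and> deg n M b u + f u \<le> Zm u"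
    proof (cases "u = v")
      case True then show ?thesis using fv d4 Za Zb um by auto
    next
      case False then have "inr (deg n M a u - deg n M b u) (f u)" using fr um by blast
      then show ?thesis using Za Zb um unfolding inr_def by auto
    qed
  qed
  have ia': "inF m n M z Zm a'" unfolding inF_def
  proof (intro conjI allI impI)
    fix j assume "j < n" then show "0 \<le> a' j" using AB nn unfolding a'_def by force
  next
    fix j assume "n \<le> j" then show "a' j = 0" unfolding a'_def by simp
  next
    fix u assume "u < m" then show "deg n M a' u \<le> Zm u" using rng da' by simp
  next
    fix u assume um: "u < m"
    then have "even (f u)" using fe by blast
    then show "deg n M a' u mod 2 = z u mod 2" using pa um da' par_aux3 by metis
  qed
  have ib': "inF m n M z Zm b'" unfolding inF_def
  proof (intro conjI allI impI)
    fix j assume "j < n" then show "0 \<le> b' j" using AB nn unfolding b'_def by force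
  next
    fix j assume "n \<le> j" then show "b' j = 0" unfolding b'_def by simp
  next
    fix u assume "u < m" then show "deg n M b' u \<le> Zm u" using rng db' by simp
  next
    fix u assume um: "u < m"
    then have "even (f u)" using fe by blast
    then show "deg n M b' u mod 2 = z u mod 2" using pb um db' par_aux3 by metis
  qed
  have sm: "\<forall>j. a' j + b' j = a j + b j"
  proof
    fix j show "a' j + b' j = a j + b j"
      using a b unfolding a'_def b'_def inF_def by (cases "j < n") auto
  qed
  have "phi m n M z a' + phi m n M z b' = (\<Sum>u<m. (deg n M a u - f u - z u)\<^sup>2 + (deg n M b u + f u - z u)\<^sup>2)"
    unfolding phi_def da' db' by (simp add: sum.distrib)
  also have "\<dots> < (\<Sum>u<m. (deg n M a u - z u)\<^sup>2 + (deg n M b u - z u)\<^sup>2)"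
  proof (rule sum_strict_mono_ex1)
    show "finite {..<m}" by simp
    show "\<forall>u\<in>{..<m}. (deg n M a u - f u - z u)\<^sup>2 + (deg n M b u + f u - z u)\<^sup>2 \<le> (deg n M a u - z u)\<^sup>2 + (deg n M b u - z u)\<^sup>2"
    proof
      fix u assume "u \<in> {..<m}"
      then have um: "u < m" by simp
      show "(deg n M a u - f u - z u)\<^sup>2 + (deg n M b u + f u - z u)\<^sup>2 \<le> (deg n M a u - z u)\<^sup>2 + (deg n M b u - z u)\<^sup>2"
      proof (cases "u = v")
        case True
        then show ?thesis using sq_step_strict[OF d4, of "z v"] fv by simp
      next
        case False
        then show ?thesis using sq_step fr um by blast
      qed
    qed
    show "\<exists>u\<in>{..<m}. (deg n M a u - f u - z u)\<^sup>2 + (deg n M b u + f u - z u)\<^sup>2 < (deg n M a u - z u)\<^sup>2 + (deg n M b u - z u)\<^sup>2"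
      using sq_step_strict[OF d4, of "z v"] fv vm by (intro bexI[of _ v]) auto
  qed
  also have "\<dots> = phi m n M z a + phi m n M z b" unfolding phi_def by (simp add: sum.distrib)
  finally show ?thesis using ia' ib' sm by blast
qed

lemma finite_box: "finite {x::nat \<Rightarrow> int. (\<forall>j<n. 0 \<le> x j \<and> x j \<le> Bd) \<and> (\<forall>j. n \<le> j \<longrightarrow> x j = 0)}"
proof -
  define g where "g = (\<lambda>(f::nat \<Rightarrow> int) j. if j < n then f j else 0)"
  have "{x::nat \<Rightarrow> int. (\<forall>j<n. 0 \<le> x j \<and> x j \<le> Bd) \<and> (\<forall>j. n \<le> j \<longrightarrow> x j = 0)}
        \<subseteq> g ` (PiE {..<n} (\<lambda>_. {0..Bd}))"
  proof
    fix x :: "nat \<Rightarrow> int" assume x: "x \<in> {x. (\<forall>j<n. 0 \<le> x j \<and> x j \<le> Bd) \<and> (\<forall>j. n \<le> j \<longrightarrow> x j = 0)}"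
    define y where "y = (\<lambda>j. if j \<in> {..<n} then x j else undefined)"
    have "\<forall>j. x j = g y j"
    proof
      fix j show "x j = g y j" using x by (cases "j < n") (simp_all add: g_def y_def)
    qed
    then have "x = g y" by (simp add: fun_eq_iff)
    moreover have "y \<in> PiE {..<n} (\<lambda>_. {0..Bd})"
      unfolding PiE_iff
    proof
      show "\<forall>i\<in>{..<n}. y i \<in> {0..Bd}" using x by (simp add: y_def)
      show "y \<in> extensional {..<n}" unfolding extensional_def y_def by simp
    qed
    ultimately show "x \<in> g ` (PiE {..<n} (\<lambda>_. {0..Bd}))" by blast
  qed
  moreover have "finite (g ` (PiE {..<n} (\<lambda>_. {0..Bd})))" by (intro finite_imageI finite_PiE) auto
  ultimately show ?thesis by (rule finite_subset)
qed

lemma coord_le_deg: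
  assumes G: "simple_graph_incidence m n M" and j: "j < n" and w: "w < m" "M w j = 1"
    and nn: "\<forall>i<n. 0 \<le> x i"
  shows "x j \<le> deg n M x w"
proof -
  have "M w j * x j \<le> (\<Sum>i<n. M w i * x i)"
  proof (rule member_le_sum)
    show "j \<in> {..<n}" using j by simp
    show "finite {..<n}" by simp
    fix i assume "i \<in> {..<n} - {j}"
    then have "i < n" by simp
    then show "0 \<le> M w i * x i" using M01[OF G w(1)] nn by (metis mult_nonneg_nonneg order_refl zero_le_one)
  qed
  then show ?thesis using w by (simp add: deg_def)
qed

lemma sum_ind:
  assumes "finite F" "y \<in> F"
  shows "(\<Sum>x\<in>F. (if x = y then 1 else 0) * (g x :: real)) = g y"
proof -
  have "(\<Sum>x\<in>F. (if x = y then 1 else 0) * g x) = (\<Sum>x\<in>F. if x = y then g y else 0)"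
    by (rule sum.cong) auto
  then show ?thesis using assms by simp
qed

lemma sum_shift:
  fixes ws :: "'a \<Rightarrow> real"
  assumes fin: "finite F" and in4: "a' \<in> F" "b' \<in> F" "p \<in> F" "q \<in> F"
  shows "(\<Sum>x\<in>F. (ws x + t * ((if x = a' then 1 else 0) + (if x = b' then 1 else 0)
             - (if x = p then 1 else 0) - (if x = q then 1 else 0))) * g x)
       = (\<Sum>x\<in>F. ws x * g x) + t * (g a' + g b' - g p - g q)"
proof -
  have "(\<Sum>x\<in>F. (ws x + t * ((if x = a' then 1 else 0) + (if x = b' then 1 else 0)
             - (if x = p then 1 else 0) - (if x = q then 1 else 0))) * g x)
       = (\<Sum>x\<in>F. ws x * g x) + t * ((\<Sum>x\<in>F. (if x = a' then 1 else 0) * g x) + (\<Sum>x\<in>F. (if x = b' then 1 else 0) * g x)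
            - (\<Sum>x\<in>F. (if x = p then 1 else 0) * g x) - (\<Sum>x\<in>F. (if x = q then 1 else 0) * g x))"
    by (simp add: algebra_simps sum.distrib sum_subtractf sum_distrib_left)
  then show ?thesis using sum_ind[OF fin] in4 by simp
qed

lemma core:
  fixes X :: "nat \<Rightarrow> nat \<Rightarrow> int" and lam :: "nat \<Rightarrow> real" and z c :: "nat \<Rightarrow> int"
  assumes G: "simple_graph_incidence m n M" and finK: "finite K"
    and lnn: "\<forall>k\<in>K. 0 \<le> lam k" and lsum: "(\<Sum>k\<in>K. lam k) = 1"
    and XF: "\<forall>k\<in>K. (\<forall>j<n. 0 \<le> X k j) \<and> (\<forall>j. n \<le> j \<longrightarrow> X k j = 0) \<and> (\<forall>u<m. deg n M (X k) u mod 2 = z u mod 2)"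
    and zavg: "\<forall>u<m. real_of_int (z u) = (\<Sum>k\<in>K. lam k * real_of_int (deg n M (X k) u))"
  shows "\<exists>y. (\<forall>j<n. 0 \<le> y j) \<and> (\<forall>u<m. deg n M y u = z u) \<and>
           real_of_int (\<Sum>j<n. c j * y j) \<le> (\<Sum>k\<in>K. lam k * real_of_int (\<Sum>j<n. c j * X k j))"
proof -
  define Zm where "Zm = (\<lambda>u. \<Sum>k\<in>K. \<bar>deg n M (X k) u\<bar>)"
  define F where "F = {x. inF m n M z Zm x}"
  define Bd where "Bd = (\<Sum>u<m. Zm u)"
  have Zm_nn: "\<And>u. 0 \<le> Zm u" unfolding Zm_def by (simp add: sum_nonneg)
  have finF: "finite F"
  proof (rule finite_subset[OF _ finite_box[of n Bd]])
    show "F \<subseteq> {x. (\<forall>j<n. 0 \<le> x j \<and> x j \<le> Bd) \<and> (\<forall>j. n \<le> j \<longrightarrow> x j = 0)}"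
    proof
      fix x assume "x \<in> F"
      then have x: "inF m n M z Zm x" by (simp add: F_def)
      have nn: "\<forall>j<n. 0 \<le> x j" using x by (simp add: inF_def)
      have "\<forall>j<n. x j \<le> Bd"
      proof (intro allI impI)
        fix j assume j: "j < n"
        obtain w where w: "w < m" "M w j = 1" using has_end[OF G j] by blast
        have "x j \<le> deg n M x w" by (rule coord_le_deg[OF G j w nn])
        also have "\<dots> \<le> Zm w" using x w by (simp add: inF_def)
        also have "\<dots> \<le> Bd" unfolding Bd_def using w Zm_nn by (intro member_le_sum) auto
        finally show "x j \<le> Bd" .
      qed
      then show "x \<in> {x. (\<forall>j<n. 0 \<le> x j \<and> x j \<le> Bd) \<and> (\<forall>j. n \<le> j \<longrightarrow> x j = 0)}"
        using nn x by (auto simp: inF_def)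
    qed
  qed
  have XinF: "\<forall>k\<in>K. X k \<in> F"
  proof
    fix k assume k: "k \<in> K"
    have "\<forall>u<m. deg n M (X k) u \<le> Zm u"
    proof (intro allI impI)
      fix u assume "u < m"
      have "deg n M (X k) u \<le> \<bar>deg n M (X k) u\<bar>" by simp
      also have "\<dots> \<le> Zm u" unfolding Zm_def using k finK by (intro member_le_sum) auto
      finally show "deg n M (X k) u \<le> Zm u" .
    qed
    then show "X k \<in> F" using XF k by (simp add: F_def inF_def)
  qed
  define val where "val = (\<lambda>(x::nat\<Rightarrow>int) j. real_of_int (x j))"
  define xb where "xb = (\<lambda>j. \<Sum>k\<in>K. lam k * real_of_int (X k j))"
  define w0 where "w0 = (\<lambda>x. sum lam {k. k \<in> K \<and> X k = x})"
  have key: "(\<Sum>x\<in>F. w0 x * g x) = (\<Sum>k\<in>K. lam k * g (X k))" for g :: "(nat \<Rightarrow> int) \<Rightarrow> real"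
  proof -
    have e: "w0 x * g x = (\<Sum>k\<in>{k. k \<in> K \<and> X k = x}. lam k * g (X k))" for x
      unfolding w0_def sum_distrib_right by (rule sum.cong) auto
    have "(\<Sum>x\<in>F. w0 x * g x) = (\<Sum>x\<in>F. \<Sum>k\<in>{k. k \<in> K \<and> X k = x}. lam k * g (X k))"
      using e by simp
    also have "\<dots> = (\<Sum>k\<in>K. lam k * g (X k))"
      by (rule sum.group[OF finK finF]) (use XinF in auto)
    finally show ?thesis .
  qed
  have rep0: "isrep F val n xb w0" unfolding isrep_def
  proof (intro conjI ballI allI impI)
    fix x assume "x \<in> F" show "0 \<le> w0 x" unfolding w0_def using lnn by (intro sum_nonneg) auto
  next
    fix x assume "x \<notin> F"
    then have e: "{k. k \<in> K \<and> X k = x} = {}" using XinF by auto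
    show "w0 x = 0" unfolding w0_def using e by (metis sum.empty)
  next
    show "sum w0 F = 1" using key[of "\<lambda>_. 1"] lsum by simp
  next
    fix j assume "j < n"
    show "(\<Sum>x\<in>F. w0 x * val x j) = xb j" using key[of "\<lambda>x. val x j"] unfolding xb_def val_def by simp
  qed
  define psi where "psi = (\<lambda>x. real_of_int (phi m n M z x))"
  obtain ws where ws: "isrep F val n xb ws" and wmin: "\<forall>w. isrep F val n xb w \<longrightarrow>
            (\<Sum>x\<in>F. ws x * psi x) \<le> (\<Sum>x\<in>F. w x * psi x)"
    using rep_min_exists[OF finF rep0, of psi] by blast
  have lin: "(\<Sum>x\<in>F. w x * real_of_int (\<Sum>j<n. coef j * x j)) = (\<Sum>j<n. real_of_int (coef j) * xb j)"
    if r: "isrep F val n xb w" for w coef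
  proof -
    have "(\<Sum>x\<in>F. w x * real_of_int (\<Sum>j<n. coef j * x j)) = (\<Sum>x\<in>F. \<Sum>j<n. real_of_int (coef j) * (w x * val x j))"
      unfolding val_def by (simp add: sum_distrib_left algebra_simps)
    also have "\<dots> = (\<Sum>j<n. \<Sum>x\<in>F. real_of_int (coef j) * (w x * val x j))" by (rule sum.swap)
    also have "\<dots> = (\<Sum>j<n. real_of_int (coef j) * (\<Sum>x\<in>F. w x * val x j))" by (simp add: sum_distrib_left)
    also have "\<dots> = (\<Sum>j<n. real_of_int (coef j) * xb j)" using r unfolding isrep_def by simp
    finally show ?thesis .
  qed
  have linall: "(\<Sum>x\<in>F. w x * real_of_int (\<Sum>j<n. coef j * x j)) = (\<Sum>k\<in>K. lam k * real_of_int (\<Sum>j<n. coef j * X k j))"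
    if r: "isrep F val n xb w" for w coef
    using lin[OF r, of coef] lin[OF rep0, of coef] key[of "\<lambda>x. real_of_int (\<Sum>j<n. coef j * x j)"] by simp
  have degavg: "(\<Sum>x\<in>F. w x * real_of_int (deg n M x u)) = real_of_int (z u)"
    if r: "isrep F val n xb w" and u: "u < m" for w u
    using linall[OF r, of "M u"] zavg u unfolding deg_def by simp
  have wsnn: "\<forall>x\<in>F. 0 \<le> ws x" and wsout: "\<forall>x. x \<notin> F \<longrightarrow> ws x = 0" and ws1: "sum ws F = 1"
    using ws unfolding isrep_def by auto
  define C where "C = (\<Sum>k\<in>K. lam k * real_of_int (\<Sum>j<n. c j * X k j))"
  have costavg: "(\<Sum>x\<in>F. ws x * real_of_int (\<Sum>j<n. c j * x j)) = C"
    unfolding C_def by (rule linall[OF ws])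
  show ?thesis
  proof (cases "\<forall>x\<in>F. ws x > 0 \<longrightarrow> (\<forall>u<m. deg n M x u = z u)")
    case True
    have "\<exists>y\<in>F. ws y > 0 \<and> real_of_int (\<Sum>j<n. c j * y j) \<le> C"
    proof (rule ccontr)
      assume "\<not> ?thesis"
      then have H: "\<forall>y\<in>F. ws y > 0 \<longrightarrow> real_of_int (\<Sum>j<n. c j * y j) > C" by auto
      obtain y0 where y0: "y0 \<in> F" "ws y0 > 0"
      proof (rule ccontr)
        assume "\<not> thesis"
        then have "\<forall>y\<in>F. ws y \<le> 0" using that by force
        then have "sum ws F \<le> 0" by (simp add: sum_nonpos)
        then show False using ws1 by simp
      qed
      have "0 < (\<Sum>x\<in>F. ws x * (real_of_int (\<Sum>j<n. c j * x j) - C))"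
      proof (rule sum_pos2[OF finF y0(1)])
        show "0 < ws y0 * (real_of_int (\<Sum>j<n. c j * y0 j) - C)" using H y0 by simp
        show "\<And>i. i \<in> F \<Longrightarrow> 0 \<le> ws i * (real_of_int (\<Sum>j<n. c j * i j) - C)"
        proof -
          fix i assume i: "i \<in> F"
          show "0 \<le> ws i * (real_of_int (\<Sum>j<n. c j * i j) - C)"
          proof (cases "ws i > 0")
            case True
            then have "0 \<le> ws i" by simp
            moreover have "0 \<le> real_of_int (\<Sum>j<n. c j * i j) - C" using H i True by force
            ultimately show ?thesis by (rule mult_nonneg_nonneg)
          next
            case False then have "ws i = 0" using wsnn i by force
            then show ?thesis by simp
          qed
        qed
      qed
      also have "(\<Sum>x\<in>F. ws x * (real_of_int (\<Sum>j<n. c j * x j) - C)) = C - C * sum ws F"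
        using costavg by (simp add: algebra_simps sum_subtractf sum_distrib_left)
      also have "\<dots> = 0" using ws1 by simp
      finally show False by simp
    qed
    then obtain y where y: "y \<in> F" "ws y > 0" "real_of_int (\<Sum>j<n. c j * y j) \<le> C" by blast
    have "\<forall>j<n. 0 \<le> y j" using y(1) by (simp add: F_def inF_def)
    moreover have "\<forall>u<m. deg n M y u = z u" using True y by blast
    ultimately show ?thesis using y(3) unfolding C_def by blast
  next
    case False
    then obtain a u where a: "a \<in> F" "ws a > 0" and u: "u < m" "deg n M a u \<noteq> z u" by blast
    have avg0: "(\<Sum>x\<in>F. ws x * (real_of_int (deg n M x u) - real_of_int (z u))) = 0"
    proof -
      have z1: "(\<Sum>x\<in>F. ws x * real_of_int (z u)) = real_of_int (z u)"
        using ws1 by (simp add: sum_distrib_right[symmetric])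
      have "(\<Sum>x\<in>F. ws x * (real_of_int (deg n M x u) - real_of_int (z u)))
          = (\<Sum>x\<in>F. ws x * real_of_int (deg n M x u)) - (\<Sum>x\<in>F. ws x * real_of_int (z u))"
        by (simp add: right_diff_distrib sum_subtractf)
      then show ?thesis using z1 degavg[OF ws u(1)] by simp
    qed
    obtain p q v where pq: "p \<in> F" "q \<in> F" "ws p > 0" "ws q > 0" "v < m" "deg n M p v > z v" "deg n M q v < z v"
    proof (cases "deg n M a u > z u")
      case True
      have "\<exists>q\<in>F. ws q > 0 \<and> deg n M q u < z u"
      proof (rule ccontr)
        assume "\<not> ?thesis"
        then have H: "\<forall>q\<in>F. ws q > 0 \<longrightarrow> deg n M q u \<ge> z u" by auto
        have "0 < (\<Sum>x\<in>F. ws x * (real_of_int (deg n M x u) - real_of_int (z u)))"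
        proof (rule sum_pos2[OF finF a(1)])
          show "0 < ws a * (real_of_int (deg n M a u) - real_of_int (z u))" using a True by simp
          fix i assume i: "i \<in> F"
          show "0 \<le> ws i * (real_of_int (deg n M i u) - real_of_int (z u))"
          proof (cases "ws i > 0")
            case True
            then have "0 \<le> ws i" by simp
            moreover have "0 \<le> real_of_int (deg n M i u) - real_of_int (z u)" using H i True by force
            ultimately show ?thesis by (rule mult_nonneg_nonneg)
          next
            case False then have "ws i = 0" using wsnn i by force
            then show ?thesis by simp
          qed
        qed
        then show False using avg0 by simp
      qed
      then obtain q where "q \<in> F" "ws q > 0" "deg n M q u < z u" by blast
      then show ?thesis using that[of a q u] a True u by blast
    next
      case False
      then have lt: "deg n M a u < z u" using u by simp
      have "\<exists>p\<in>F. ws p > 0 \<and> deg n M p u > z u"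
      proof (rule ccontr)
        assume "\<not> ?thesis"
        then have H: "\<forall>p\<in>F. ws p > 0 \<longrightarrow> deg n M p u \<le> z u" by auto
        have "0 < (\<Sum>x\<in>F. ws x * (real_of_int (z u) - real_of_int (deg n M x u)))"
        proof (rule sum_pos2[OF finF a(1)])
          show "0 < ws a * (real_of_int (z u) - real_of_int (deg n M a u))" using a lt by simp
          fix i assume i: "i \<in> F"
          show "0 \<le> ws i * (real_of_int (z u) - real_of_int (deg n M i u))"
          proof (cases "ws i > 0")
            case True
            then have "0 \<le> ws i" by simp
            moreover have "0 \<le> real_of_int (z u) - real_of_int (deg n M i u)" using H i True by force
            ultimately show ?thesis by (rule mult_nonneg_nonneg)
          next
            case False then have "ws i = 0" using wsnn i by force
            then show ?thesis by simp
          qed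
        qed
        also have "(\<Sum>x\<in>F. ws x * (real_of_int (z u) - real_of_int (deg n M x u)))
             = - (\<Sum>x\<in>F. ws x * (real_of_int (deg n M x u) - real_of_int (z u)))"
          by (simp add: sum_negf[symmetric] algebra_simps)
        finally show False using avg0 by simp
      qed
      then obtain p where "p \<in> F" "ws p > 0" "deg n M p u > z u" by blast
      then show ?thesis using that[of p a u] a lt u by blast
    qed
    have pF: "inF m n M z Zm p" and qF: "inF m n M z Zm q" using pq by (auto simp: F_def)
    obtain a' b' where ex: "inF m n M z Zm a'" "inF m n M z Zm b'" "\<forall>j. a' j + b' j = p j + q j"
      "phi m n M z a' + phi m n M z b' < phi m n M z p + phi m n M z q"
      using exchange[OF G pF qF pq(5) pq(6) pq(7)] by blast
    have a'F: "a' \<in> F" and b'F: "b' \<in> F" using ex by (auto simp: F_def)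
    have pnq: "p \<noteq> q" using pq by auto
    define t where "t = min (ws p) (ws q)"
    have tpos: "t > 0" using pq by (simp add: t_def)
    define w' where "w' = (\<lambda>x. ws x + t * ((if x = a' then 1 else 0) + (if x = b' then 1 else 0)
             - (if x = p then 1 else 0) - (if x = q then 1 else 0)))"
    have shift: "(\<Sum>x\<in>F. w' x * g x) = (\<Sum>x\<in>F. ws x * g x) + t * (g a' + g b' - g p - g q)" for g
      unfolding w'_def by (rule sum_shift[OF finF a'F b'F pq(1) pq(2)])
    have rep': "isrep F val n xb w'" unfolding isrep_def
    proof (intro conjI ballI allI impI)
      fix x assume xF: "x \<in> F"
      have "0 \<le> ws x - t * ((if x = p then 1 else 0) + (if x = q then 1 else 0))"
      proof (cases "x = p")
        case True then show ?thesis using pnq t_def by auto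
      next
        case False then show ?thesis using t_def wsnn xF by (cases "x = q") auto
      qed
      moreover have "t * ((if x = a' then 1 else 0) + (if x = b' then 1 else 0)) \<ge> 0" using tpos by simp
      ultimately show "0 \<le> w' x" unfolding w'_def by (simp add: algebra_simps)
    next
      fix x assume "x \<notin> F"
      then show "w' x = 0" using wsout a'F b'F pq(1,2) unfolding w'_def by auto
    next
      show "sum w' F = 1" using shift[of "\<lambda>_. 1"] ws1 by simp
    next
      fix j assume j: "j < n"
      have "val a' j + val b' j - val p j - val q j = 0"
        using ex(3) unfolding val_def by (metis add_diff_cancel_left' diff_diff_eq of_int_add diff_self)
      then show "(\<Sum>x\<in>F. w' x * val x j) = xb j" using shift[of "\<lambda>x. val x j"] ws j unfolding isrep_def by simp
    qed
    have "(\<Sum>x\<in>F. w' x * psi x) < (\<Sum>x\<in>F. ws x * psi x)"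
    proof -
      have "psi a' + psi b' - psi p - psi q < 0" using ex(4) unfolding psi_def by linarith
      then have "t * (psi a' + psi b' - psi p - psi q) < 0" using tpos by (simp add: mult_pos_neg)
      then show ?thesis using shift[of psi] by simp
    qed
    then show ?thesis using wmin rep' by (meson not_le)
  qed
qed

lemma fc_le:
  assumes "\<forall>j<n. 0 \<le> y j" "\<forall>i<m. deg n M y i = z i"
  shows "fcM m n c M z \<le> ereal (of_int (\<Sum>j<n. c j * y j))"
  unfolding fcM_def using assms by (intro Inf_lower) (auto simp: deg_def)

lemma fc_cases:
  assumes G: "simple_graph_incidence m n M"
  shows "fcM m n c M z = \<infinity> \<or> (\<exists>x. (\<forall>j<n. 0 \<le> x j) \<and> (\<forall>j. n \<le> j \<longrightarrow> x j = 0) \<and>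
           (\<forall>i<m. deg n M x i = z i) \<and> fcM m n c M z = ereal (of_int (\<Sum>j<n. c j * x j)))"
proof -
  define S where "S = {ereal (of_int (\<Sum>j<n. c j * x j)) | x :: nat \<Rightarrow> int.
      (\<forall>j<n. 0 \<le> x j) \<and> (\<forall>i<m. (\<Sum>j<n. M i j * x j) = z i)}"
  have fS: "fcM m n c M z = Inf S" unfolding fcM_def S_def by simp
  define Bd where "Bd = (\<Sum>u<m. \<bar>z u\<bar>)"
  define T where "T = {x::nat \<Rightarrow> int. (\<forall>j<n. 0 \<le> x j \<and> x j \<le> Bd) \<and> (\<forall>j. n \<le> j \<longrightarrow> x j = 0)}"
  have norm: "\<exists>x0. x0 \<in> T \<and> (\<forall>j<n. 0 \<le> x0 j) \<and> (\<forall>j. n \<le> j \<longrightarrow> x0 j = 0) \<and> (\<forall>i<m. deg n M x0 i = z i) \<and>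
         (\<Sum>j<n. c j * x0 j) = (\<Sum>j<n. c j * x j)"
    if x: "\<forall>j<n. 0 \<le> x j" "\<forall>i<m. (\<Sum>j<n. M i j * x j) = z i" for x
  proof -
    define x0 where "x0 = (\<lambda>j. if j < n then x j else 0)"
    have d: "\<And>i. deg n M x0 i = (\<Sum>j<n. M i j * x j)" unfolding deg_def x0_def by (rule sum.cong) auto
    have cst: "(\<Sum>j<n. c j * x0 j) = (\<Sum>j<n. c j * x j)" unfolding x0_def by (rule sum.cong) auto
    have nn: "\<forall>j<n. 0 \<le> x0 j" using x by (simp add: x0_def)
    have "\<forall>j<n. x0 j \<le> Bd"
    proof (intro allI impI)
      fix j assume j: "j < n"
      obtain w where w: "w < m" "M w j = 1" using has_end[OF G j] by blast
      have "x0 j \<le> deg n M x0 w" by (rule coord_le_deg[OF G j w nn])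
      also have "\<dots> = z w" using d x w by simp
      also have "\<dots> \<le> \<bar>z w\<bar>" by simp
      also have "\<dots> \<le> Bd" unfolding Bd_def using w by (intro member_le_sum) auto
      finally show "x0 j \<le> Bd" .
    qed
    then have "x0 \<in> T" using nn by (auto simp: T_def x0_def)
    then show ?thesis using nn d x cst by (intro exI[of _ x0]) (auto simp: x0_def)
  qed
  have sub: "S \<subseteq> (\<lambda>x. ereal (of_int (\<Sum>j<n. c j * x j))) ` T"
  proof
    fix e assume "e \<in> S"
    then obtain x where x: "\<forall>j<n. 0 \<le> x j" "\<forall>i<m. (\<Sum>j<n. M i j * x j) = z i"
      "e = ereal (of_int (\<Sum>j<n. c j * x j))" unfolding S_def by blast
    obtain x0 where x0: "x0 \<in> T" "(\<Sum>j<n. c j * x0 j) = (\<Sum>j<n. c j * x j)" using norm[OF x(1,2)] by blast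
    then have "e = ereal (of_int (\<Sum>j<n. c j * x0 j))" using x(3) by simp
    then show "e \<in> (\<lambda>x. ereal (of_int (\<Sum>j<n. c j * x j))) ` T" using x0(1) by (rule image_eqI)
  qed
  have finS: "finite S"
    using sub finite_box[of n Bd] unfolding T_def by (meson finite_imageI finite_subset)
  show ?thesis
  proof (cases "S = {}")
    case True then show ?thesis using fS by (simp add: top_ereal_def)
  next
    case False
    have "Inf S \<in> S" using cInf_eq_Min[OF finS False] Min_in[OF finS False] by simp
    then obtain x where x: "\<forall>j<n. 0 \<le> x j" "\<forall>i<m. (\<Sum>j<n. M i j * x j) = z i"
      "Inf S = ereal (of_int (\<Sum>j<n. c j * x j))" unfolding S_def by blast
    obtain x0 where x0: "(\<forall>j<n. 0 \<le> x0 j) \<and> (\<forall>j. n \<le> j \<longrightarrow> x0 j = 0) \<and> (\<forall>i<m. deg n M x0 i = z i) \<and>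
         (\<Sum>j<n. c j * x0 j) = (\<Sum>j<n. c j * x j)" using norm[OF x(1,2)] by blast
    then have "fcM m n c M z = ereal (of_int (\<Sum>j<n. c j * x0 j))" using x(3) fS by simp
    then show ?thesis using x0 by blast
  qed
qed

theorem lemma7:
  fixes m n l :: nat
    and M :: "nat \<Rightarrow> nat \<Rightarrow> int"
    and c r z :: "nat \<Rightarrow> int"
    and zs :: "nat \<Rightarrow> nat \<Rightarrow> int"
    and lam :: "nat \<Rightarrow> real"
  assumes "simple_graph_incidence m n M"
    and "\<forall>k<l. \<forall>i<m. zs k i mod 2 = r i mod 2"
    and "\<forall>k<l. 0 \<le> lam k"
    and "(\<Sum>k<l. lam k) = 1"
    and "\<forall>i<m. real_of_int (z i) = (\<Sum>k<l. lam k * real_of_int (zs k i))"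
    and "\<forall>i<m. z i mod 2 = r i mod 2"
  shows "fcM m n c M z \<le> (\<Sum>k<l. ereal (lam k) * fcM m n c M (zs k))"
proof -
  note G = assms(1)
  define K where "K = {k. k < l \<and> lam k > 0}"
  have finK: "finite K" unfolding K_def by simp
  have Ksub: "K \<subseteq> {..<l}" unfolding K_def by auto
  have zero_out: "\<And>k. k \<in> {..<l} - K \<Longrightarrow> lam k = 0" using assms(3) unfolding K_def by force
  show ?thesis
  proof (cases "\<exists>k\<in>K. fcM m n c M (zs k) = \<infinity>")
    case True
    then obtain k where k: "k \<in> K" "fcM m n c M (zs k) = \<infinity>" by blast
    have "ereal (lam k) * fcM m n c M (zs k) = \<infinity>" using k unfolding K_def by simp
    have kk: "k < l" "lam k > 0" using k(1) unfolding K_def by auto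
    have "(\<Sum>k<l. ereal (lam k) * fcM m n c M (zs k)) = \<infinity>"
      by (subst sum_Pinfty) (use kk k(2) in \<open>auto intro!: bexI[of _ k]\<close>)
    then show ?thesis by simp
  next
    case False
    then have "\<forall>k\<in>K. \<exists>x. (\<forall>j<n. 0 \<le> x j) \<and> (\<forall>j. n \<le> j \<longrightarrow> x j = 0) \<and>
           (\<forall>i<m. deg n M x i = zs k i) \<and> fcM m n c M (zs k) = ereal (of_int (\<Sum>j<n. c j * x j))"
      using fc_cases[OF G] by blast
    then obtain X where X: "\<forall>k\<in>K. (\<forall>j<n. 0 \<le> X k j) \<and> (\<forall>j. n \<le> j \<longrightarrow> X k j = 0) \<and>
           (\<forall>i<m. deg n M (X k) i = zs k i) \<and> fcM m n c M (zs k) = ereal (of_int (\<Sum>j<n. c j * X k j))"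
      by metis
    have lsum: "(\<Sum>k\<in>K. lam k) = 1"
      using assms(4) sum.mono_neutral_right[OF _ Ksub, of lam] zero_out by simp
    have XF: "\<forall>k\<in>K. (\<forall>j<n. 0 \<le> X k j) \<and> (\<forall>j. n \<le> j \<longrightarrow> X k j = 0) \<and> (\<forall>u<m. deg n M (X k) u mod 2 = z u mod 2)"
      using X assms(2,6) unfolding K_def by auto
    have zavg: "\<forall>u<m. real_of_int (z u) = (\<Sum>k\<in>K. lam k * real_of_int (deg n M (X k) u))"
    proof (intro allI impI)
      fix u assume u: "u < m"
      have "(\<Sum>k<l. lam k * real_of_int (zs k u)) = (\<Sum>k\<in>K. lam k * real_of_int (zs k u))"
        using sum.mono_neutral_right[OF _ Ksub, of "\<lambda>k. lam k * real_of_int (zs k u)"] zero_out by simp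
      also have "\<dots> = (\<Sum>k\<in>K. lam k * real_of_int (deg n M (X k) u))"
        using X u by (intro sum.cong) auto
      finally show "real_of_int (z u) = (\<Sum>k\<in>K. lam k * real_of_int (deg n M (X k) u))" using assms(5) u by simp
    qed
    have lnn: "\<forall>k\<in>K. 0 \<le> lam k" unfolding K_def by auto
    obtain y where y: "\<forall>j<n. 0 \<le> y j" "\<forall>u<m. deg n M y u = z u"
      "real_of_int (\<Sum>j<n. c j * y j) \<le> (\<Sum>k\<in>K. lam k * real_of_int (\<Sum>j<n. c j * X k j))"
      using core[OF G finK lnn lsum XF zavg, of c] by blast
    have rhs: "(\<Sum>k<l. ereal (lam k) * fcM m n c M (zs k)) = ereal (\<Sum>k\<in>K. lam k * real_of_int (\<Sum>j<n. c j * X k j))"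
    proof -
      have "(\<Sum>k<l. ereal (lam k) * fcM m n c M (zs k)) = (\<Sum>k\<in>K. ereal (lam k) * fcM m n c M (zs k))"
        using sum.mono_neutral_right[OF _ Ksub, of "\<lambda>k. ereal (lam k) * fcM m n c M (zs k)"] zero_out by simp
      also have "\<dots> = (\<Sum>k\<in>K. ereal (lam k * real_of_int (\<Sum>j<n. c j * X k j)))"
        using X by (intro sum.cong) auto
      also have "\<dots> = ereal (\<Sum>k\<in>K. lam k * real_of_int (\<Sum>j<n. c j * X k j))" by simp
      finally show ?thesis .
    qed
    have "fcM m n c M z \<le> ereal (of_int (\<Sum>j<n. c j * y j))" by (rule fc_le[OF y(1,2)])
    also have "\<dots> \<le> ereal (\<Sum>k\<in>K. lam k * real_of_int (\<Sum>j<n. c j * X k j))" using y(3) by simp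
    finally show ?thesis using rhs by simp
  qed
qed

end
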